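(* Let $\mu$ and $\nu$ be positive Borel measures on $\mathbb{R}$ of infinite support with finite moments, both determinate (so polynomials are dense in $L^2(\mu)$ and $L^2(\nu)$), and suppose $d\mu=r\,d\nu$ for a real polynomial $r$ of degree $1$. Let $\Phi_n$ (resp. $\phi_n$) be the orthonormal polynomials of degree $n$ for $\mu$ (resp. $\nu$). Let $L$ be a self-adjoint operator on $L^2(\mu)$ with domain the polynomials $\mathcal{P}$ (i.e. symmetric on $\mathcal{P}$) such that $L\Phi_n=\Lambda_n\Phi_n$ with $\Lambda_n\in\mathbb{R}$, and let $\gamma$ be a constant. Then the operator $T=r(L+\gamma)$ with domain $\mathcal{P}$ on $L^2(\nu)$ (where $r$ denotes multiplication by $r$) is tridiagonal with respect to $\{\phi_n\}_{n\in\mathbb{N}}$: $\langle T\phi_n,\phi_m\rangle_{L^2(\nu)}=0$ whenever $|n-m|>1$, i.e. $T\phi_n$ is a linear combination of $\phi_{n-1},\phi_n,\phi_{n+1}$.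
   Context: Here $d\mu=r\,d\nu$ means $\int f\,d\mu=\int fr\,d\nu$ for all integrable $f$; orthonormal polynomials have real coefficients and positive leading coefficient, with $\phi_{-1}=0$. *)

theory Defs
  imports "HOL-Analysis.Analysis" "HOL-Computational_Algebra.Polynomial"
begin

definition measure_support :: "real measure \<Rightarrow> real set" where
  "measure_support M = {x. \<forall>e>0. emeasure M (ball x e) > 0}"

definition finite_moments :: "real measure \<Rightarrow> bool" where
  "finite_moments M \<longleftrightarrow> (\<forall>k::nat. integrable M (\<lambda>x. x ^ k))"

definition moment_determinate :: "real measure \<Rightarrow> bool" where
  "moment_determinate M \<longleftrightarrow>
     (\<forall>N. sets N = sets borel \<and> (\<forall>k::nat. integrable N (\<lambda>x. x ^ k) \<and>
          integral\<^sup>L N (\<lambda>x. x ^ k) = integral\<^sup>L M (\<lambda>x. x ^ k)) \<longrightarrow> N = M)"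

definition poly_inner :: "real measure \<Rightarrow> real poly \<Rightarrow> real poly \<Rightarrow> real" where
  "poly_inner M p q = integral\<^sup>L M (\<lambda>x. poly p x * poly q x)"

definition orthonormal_polys :: "real measure \<Rightarrow> (nat \<Rightarrow> real poly) \<Rightarrow> bool" where
  "orthonormal_polys M \<phi> \<longleftrightarrow>
     (\<forall>n. degree (\<phi> n) = n \<and> lead_coeff (\<phi> n) > 0) \<and>
     (\<forall>n m. poly_inner M (\<phi> n) (\<phi> m) = (if n = m then 1 else 0))"

end

theory Submission
  imports Defs
begin

lemma integrable_poly:
  assumes "finite_moments M"
  shows "integrable M (\<lambda>x. poly p x)"
proof -
  have "integrable M (\<lambda>x. \<Sum>i\<le>degree p. coeff p i * x ^ i)"
    using assms unfolding finite_moments_def by (auto intro!: integrable_sum integrable_mult_right)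
  then show ?thesis by (simp add: poly_altdef[symmetric])
qed

lemma integrable_poly_prod:
  assumes "finite_moments M"
  shows "integrable M (\<lambda>x. poly p x * poly q x)"
  using integrable_poly[OF assms, of "p*q"] by simp

lemma inner_add:
  assumes "finite_moments M"
  shows "poly_inner M (p + q) s = poly_inner M p s + poly_inner M q s"
  unfolding poly_inner_def
  using integrable_poly_prod[OF assms, of p s] integrable_poly_prod[OF assms, of q s]
  by (simp add: distrib_right)

lemma inner_smult:
  shows "poly_inner M (smult c p) s = c * poly_inner M p s"
  unfolding poly_inner_def by (simp add: mult.assoc)

lemma inner_zero: "poly_inner M 0 s = 0"
  unfolding poly_inner_def by simp

lemma inner_comm: "poly_inner M p q = poly_inner M q p"
  unfolding poly_inner_def by (simp add: mult.commute)

lemma inner_sum: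
  assumes "finite_moments M" and "finite K"
  shows "poly_inner M (\<Sum>k\<in>K. f k) s = (\<Sum>k\<in>K. poly_inner M (f k) s)"
  using assms(2) by (induction K rule: finite_induct) (auto simp: inner_zero inner_add[OF assms(1)])

lemma span:
  fixes B :: "nat \<Rightarrow> real poly"
  assumes deg: "\<And>n. degree (B n) = n" and lc: "\<And>n. lead_coeff (B n) \<noteq> 0"
  shows "degree p \<le> d \<Longrightarrow> \<exists>c. p = (\<Sum>k\<le>d. smult (c k) (B k))"
proof (induction d arbitrary: p)
  case 0
  have B0: "B 0 = [:coeff (B 0) 0:]" using deg[of 0] by (metis degree_0_id)
  have p0: "p = [:coeff p 0:]" using 0 by (metis degree_0_id le_0_eq)
  have "coeff (B 0) 0 \<noteq> 0" using lc[of 0] deg[of 0] by simp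
  then have "p = smult (coeff p 0 / coeff (B 0) 0) (B 0)"
    by (subst p0, subst B0) simp
  then show ?case by (intro exI[of _ "\<lambda>_. coeff p 0 / coeff (B 0) 0"]) simp
next
  case (Suc d)
  define c where "c = coeff p (Suc d) / lead_coeff (B (Suc d))"
  define q where "q = p - smult c (B (Suc d))"
  have "degree q \<le> d"
  proof (rule degree_le, intro allI impI)
    fix i assume "d < i"
    show "coeff q i = 0"
    proof (cases "i = Suc d")
      case True
      then show ?thesis using lc[of "Suc d"] deg[of "Suc d"] by (simp add: q_def c_def)
    next
      case False
      then have "i > Suc d" using \<open>d < i\<close> by simp
      then have "coeff p i = 0" "coeff (B (Suc d)) i = 0" using Suc.prems deg[of "Suc d"]
        by (auto intro: coeff_eq_0)
      then show ?thesis by (simp add: q_def)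
    qed
  qed
  then obtain c' where c': "q = (\<Sum>k\<le>d. smult (c' k) (B k))" using Suc.IH by blast
  have "p = (\<Sum>k\<le>Suc d. smult ((c'(Suc d := c)) k) (B k))"
    using c' by (simp add: q_def algebra_simps)
  then show ?case by blast
qed

lemma orth:
  assumes on: "orthonormal_polys M phi" and fm: "finite_moments M" and dq: "degree q < n"
  shows "poly_inner M q (phi n) = 0"
proof -
  have deg: "\<And>n. degree (phi n) = n" and lc0: "\<And>n. lead_coeff (phi n) > 0"
    using on unfolding orthonormal_polys_def by blast+
  have lc: "\<And>n. lead_coeff (phi n) \<noteq> 0" using lc0 by (metis less_irrefl)
  obtain c where c: "q = (\<Sum>k\<le>degree q. smult (c k) (phi k))"
    using span[OF deg lc, of q "degree q"] by auto
  have "poly_inner M q (phi n) = (\<Sum>k\<le>degree q. c k * poly_inner M (phi k) (phi n))"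
    by (subst c) (simp add: inner_sum[OF fm] inner_smult)
  also have "\<dots> = 0"
    using on dq unfolding orthonormal_polys_def by (intro sum.neutral) auto
  finally show ?thesis .
qed

lemma L_sum:
  assumes L_add: "\<And>p q. L (p + q) = L p + L q" and L_smult: "\<And>c p. L (smult c p) = smult c (L p)"
    and "finite K"
  shows "L (\<Sum>k\<in>K. f k) = (\<Sum>k\<in>K. L (f k))"
proof -
  have L0: "L 0 = 0" using L_smult[of 0 0] by simp
  show ?thesis using assms(3) by (induction K rule: finite_induct) (auto simp: L0 L_add)
qed

lemma L_deg:
  assumes L_add: "\<And>p q. L (p + q) = L p + L q" and L_smult: "\<And>c p. L (smult c p) = smult c (L p)"
    and on: "orthonormal_polys M Phi" and L_eig: "\<And>n. L (Phi n) = smult (Lam n) (Phi n)"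
  shows "degree (L p) \<le> degree p"
proof -
  have deg: "\<And>n. degree (Phi n) = n" and lc0: "\<And>n. lead_coeff (Phi n) > 0"
    using on unfolding orthonormal_polys_def by blast+
  have lc: "\<And>n. lead_coeff (Phi n) \<noteq> 0" using lc0 by (metis less_irrefl)
  obtain c where c: "p = (\<Sum>k\<le>degree p. smult (c k) (Phi k))"
    using span[OF deg lc, of p "degree p"] by auto
  have "L p = (\<Sum>k\<le>degree p. smult (c k * Lam k) (Phi k))"
    by (subst c) (simp add: L_sum[OF L_add L_smult] L_smult L_eig)
  also have "degree \<dots> \<le> degree p"
    by (rule degree_sum_le) (auto intro: order.trans[OF degree_smult_le] simp: deg)
  finally show ?thesis .
qed

lemma dens_inner:
  assumes density: "mu = density nu (\<lambda>x. ennreal (poly r x))"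
    and nu_borel: "sets nu = sets borel" and r_nonneg: "AE x in nu. poly r x \<ge> 0"
  shows "poly_inner mu A B = poly_inner nu (r * A) B"
proof -
  have meas: "(\<lambda>x. poly p x) \<in> borel_measurable nu" for p :: "real poly"
    unfolding measurable_cong_sets[OF nu_borel refl]
    by (intro borel_measurable_continuous_onI continuous_on_poly continuous_on_id)
  have "poly_inner mu A B = integral\<^sup>L nu (\<lambda>x. poly r x *\<^sub>R (poly A x * poly B x))"
    unfolding poly_inner_def density
    by (rule integral_density) (use meas[of "A*B"] meas[of r] r_nonneg in auto)
  then show ?thesis unfolding poly_inner_def by (simp add: mult.assoc)
qed

theorem lemma6p1:
  fixes mu nu :: "real measure" and r :: "real poly"
    and Phi phi :: "nat \<Rightarrow> real poly"
    and L :: "real poly \<Rightarrow> real poly" and Lam :: "nat \<Rightarrow> real" and \<gamma> :: real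
  assumes mu_borel: "sets mu = sets borel" and nu_borel: "sets nu = sets borel"
    and mu_supp: "infinite (measure_support mu)" and nu_supp: "infinite (measure_support nu)"
    and mu_mom: "finite_moments mu" and nu_mom: "finite_moments nu"
    and mu_det: "moment_determinate mu" and nu_det: "moment_determinate nu"
    and r_deg: "degree r = 1"
    and r_nonneg: "AE x in nu. poly r x \<ge> 0"
    and density: "mu = density nu (\<lambda>x. ennreal (poly r x))"
    and Phi_on: "orthonormal_polys mu Phi"
    and phi_on: "orthonormal_polys nu phi"
    and L_add: "\<And>p q. L (p + q) = L p + L q"
    and L_smult: "\<And>c p. L (smult c p) = smult c (L p)"
    and L_sym: "\<And>p q. poly_inner mu (L p) q = poly_inner mu p (L q)"
    and L_eig: "\<And>n. L (Phi n) = smult (Lam n) (Phi n)"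
  shows "\<forall>n m. \<bar>int n - int m\<bar> > 1 \<longrightarrow>
           poly_inner nu (r * (L (phi n) + smult \<gamma> (phi n))) (phi m) = 0"
proof (intro allI impI)
  fix n m :: nat assume nm: "\<bar>int n - int m\<bar> > 1"
  define A where "A k = L (phi k) + smult \<gamma> (phi k)" for k
  have degphi: "degree (phi k) = k" for k using phi_on unfolding orthonormal_polys_def by auto
  have degA: "degree (A k) \<le> k" for k
    unfolding A_def
    by (rule degree_add_le) (use L_deg[OF L_add L_smult Phi_on L_eig, of "phi k"] degphi
        degree_smult_le[of \<gamma> "phi k"] in auto)
  have degrA: "degree (r * A k) \<le> Suc k" for k
    using degree_mult_le[of r "A k"] degA[of k] r_deg by simp
  show "poly_inner nu (r * (L (phi n) + smult \<gamma> (phi n))) (phi m) = 0"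
  proof (cases "m > n")
    case True
    then have "degree (r * A n) < m" using degrA[of n] nm by linarith
    then show ?thesis using orth[OF phi_on nu_mom] unfolding A_def by blast
  next
    case False
    then have mn: "Suc m < n" using nm by linarith
    have "poly_inner nu (r * A n) (phi m) = poly_inner mu (A n) (phi m)"
      using dens_inner[OF density nu_borel r_nonneg] by simp
    also have "\<dots> = poly_inner mu (phi n) (L (phi m)) + \<gamma> * poly_inner mu (phi n) (phi m)"
      unfolding A_def by (simp add: inner_add[OF mu_mom] inner_smult L_sym inner_comm[of mu "phi m"])
    also have "\<dots> = poly_inner mu (A m) (phi n)"
      unfolding A_def by (simp add: inner_add[OF mu_mom] inner_smult inner_comm[of mu "phi m"] inner_comm[of mu "L (phi m)"])
    also have "\<dots> = poly_inner nu (r * A m) (phi n)"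
      using dens_inner[OF density nu_borel r_nonneg] by simp
    also have "\<dots> = 0"
      using orth[OF phi_on nu_mom] degrA[of m] mn by (meson le_less_trans)
    finally show ?thesis unfolding A_def .
  qed
qed

end
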